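(* Under the hypotheses of the following setting: $f$ satisfies $(\mathcal A)$, $t_0>0$, $q>0$, $p>1$, $y:[t_0,+\infty[\to\mathcal H$ continuously differentiable and $\lambda:[t_0,+\infty[\to\,]0,+\infty[$ continuous with $\tau(t)=\frac{1}{q^q}\big(t_0+\int_{t_0}^t[\lambda(r)]^{1/q}dr\big)^q$, $\dot y(t)+\dot\tau(t)\nabla f(y(t))=0$ and $[\lambda(t)]^p\|\dot y(t)\|^{p-1}=1$ for all $t\ge t_0$, there exists $C_1>0$ such that $$\tau(t)\ge C_1(t-t_0)^{1+q-\frac1p}\qquad\forall t\ge t_0 .$$
   Context: $\mathcal H$ is a real Hilbert space. Assumption $(\mathcal A)$: $f:\mathcal H\to\mathbb R$ is convex and continuously differentiable, $\operatorname{argmin}_{\mathcal H} f\neq\emptyset$, and $\nabla f$ is Lipschitz continuous on bounded subsets of $\mathcal H$. *)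

theory Defs
  imports "HOL-Analysis.Analysis"
begin

definition assumption_A :: "('a::{real_inner,complete_space} \<Rightarrow> real) \<Rightarrow> ('a \<Rightarrow> 'a) \<Rightarrow> bool" where
  "assumption_A f gradf \<longleftrightarrow>
     convex_on UNIV f \<and>
     (\<forall>x. (f has_derivative (\<lambda>h. gradf x \<bullet> h)) (at x)) \<and>
     continuous_on UNIV gradf \<and>
     (\<exists>x. \<forall>z. f x \<le> f z) \<and>
     (\<forall>B. bounded B \<longrightarrow> (\<exists>L. L-lipschitz_on B gradf))"

definition tau_fun :: "real \<Rightarrow> real \<Rightarrow> (real \<Rightarrow> real) \<Rightarrow> real \<Rightarrow> real" where
  "tau_fun t0 q lam t = (1 / q powr q) * (t0 + integral {t0..t} (\<lambda>r. lam r powr (1/q))) powr q"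

end

theory Submission
  imports Defs
begin

lemma grad_ineq:
  fixes f :: "'a::{real_inner,complete_space} \<Rightarrow> real"
  assumes A: "assumption_A f gradf"
  shows "f z \<ge> f x + gradf x \<bullet> (z - x)"
proof -
  have cv: "convex_on UNIV f" and der: "\<And>x. (f has_derivative (\<lambda>h. gradf x \<bullet> h)) (at x)"
    using A unfolding assumption_A_def by auto
  define d where "d = z - x"
  define g where "g = (\<lambda>s::real. f (x + s *\<^sub>R d))"
  have "convex_on UNIV g"
  proof (rule convex_onI)
    fix t a b :: real assume t: "0 < t" "t < 1"
    have "x + ((1 - t) *\<^sub>R a + t *\<^sub>R b) *\<^sub>R d = (1 - t) *\<^sub>R (x + a *\<^sub>R d) + t *\<^sub>R (x + b *\<^sub>R d)"
      by (simp add: algebra_simps)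
    then show "g ((1 - t) *\<^sub>R a + t *\<^sub>R b) \<le> (1 - t) * g a + t * g b"
      unfolding g_def using convex_onD[OF cv, of t] t by auto
  qed simp
  moreover have "(g has_field_derivative gradf x \<bullet> d) (at 0 within UNIV)"
  proof -
    have "((\<lambda>s. x + s *\<^sub>R d) has_derivative (\<lambda>h. h *\<^sub>R d)) (at 0)"
      by (auto intro!: derivative_eq_intros)
    moreover have "(f has_derivative (\<lambda>h. gradf x \<bullet> h)) (at ((\<lambda>s. x + s *\<^sub>R d) 0))"
      using der[of x] by simp
    ultimately have "((\<lambda>s. f (x + s *\<^sub>R d)) has_derivative (\<lambda>h. gradf x \<bullet> (h *\<^sub>R d))) (at 0)"
      by (rule has_derivative_compose)
    then have "(g has_derivative (\<lambda>h. gradf x \<bullet> (h *\<^sub>R d))) (at 0)" unfolding g_def by simp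
    moreover have "(\<lambda>h. gradf x \<bullet> (h *\<^sub>R d)) = (*) (gradf x \<bullet> d)" by (auto simp: fun_eq_iff)
    ultimately show ?thesis unfolding has_field_derivative_def by (rule has_derivative_eq_rhs)
  qed
  ultimately have "g 1 - g 0 \<ge> (gradf x \<bullet> d) * (1 - 0)"
    by (intro convex_on_imp_above_tangent) auto
  then show ?thesis unfolding g_def d_def by simp
qed

lemma mono_within:
  fixes \<phi> \<phi>' :: "real \<Rightarrow> real"
  assumes D: "\<forall>t\<ge>t0. (\<phi> has_real_derivative \<phi>' t) (at t within {t0..})"
    and nn: "\<forall>t\<ge>t0. \<phi>' t \<ge> 0" and T: "t0 \<le> T"
  shows "\<phi> t0 \<le> \<phi> T"
proof (rule DERIV_nonneg_imp_increasing_open[OF T])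
  fix x assume x: "t0 < x" "x < T"
  have "(\<phi> has_real_derivative \<phi>' x) (at x within {t0<..})"
    using D x by (rule_tac DERIV_subset[of _ _ _ "{t0..}"]) auto
  then have "(\<phi> has_real_derivative \<phi>' x) (at x)"
    using x by (subst (asm) at_within_open) auto
  then show "\<exists>y. (\<phi> has_real_derivative y) (at x) \<and> 0 \<le> y" using nn x by auto
next
  show "continuous_on {t0..T} \<phi>"
  proof (rule continuous_on_subset[of "{t0..}"])
    show "continuous_on {t0..} \<phi>"
      unfolding continuous_on_eq_continuous_within
    proof
      fix x assume "x \<in> {t0..}"
      then have "x \<ge> t0" by simp
      then show "continuous (at x within {t0..}) \<phi>"
        using D by (intro DERIV_continuous[of \<phi> "\<phi>' x"]) auto
    qed
  qed auto
qed

lemma tau_deriv_formula: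
  fixes lam :: "real \<Rightarrow> real"
  assumes t0: "t0 > 0" and q: "q > 0"
    and lam_cont: "continuous_on {t0..} lam"
    and lam_pos: "\<forall>t\<ge>t0. lam t > 0"
    and D: "(tau_fun t0 q lam has_real_derivative d) (at t within {t0..})"
    and t: "t \<ge> t0"
  shows "d = (1 / q powr q) * (q * (t0 + integral {t0..t} (\<lambda>r. lam r powr (1/q))) powr (q - 1) * lam t powr (1/q))"
proof -
  define b where "b = t + 1"
  define I where "I = (\<lambda>u. integral {t0..u} (\<lambda>r. lam r powr (1/q)))"
  have hc: "continuous_on {t0..b} (\<lambda>r. lam r powr (1/q))"
    using lam_pos by (intro continuous_on_powr continuous_on_subset[OF lam_cont] continuous_on_const) auto
  have tI: "t \<in> {t0..b}" using t b_def by auto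
  have "(I has_vector_derivative lam t powr (1/q)) (at t within {t0..b})"
    unfolding I_def by (rule integral_has_vector_derivative[OF hc tI])
  then have dI: "(I has_real_derivative lam t powr (1/q)) (at t within {t0..b})"
    by (simp add: has_real_derivative_iff_has_vector_derivative)
  have Ipos: "I t \<ge> 0"
    unfolding I_def using hc tI lam_pos
    by (intro integral_nonneg integrable_continuous_interval continuous_on_subset[OF hc]) auto
  have "tau_fun t0 q lam = (\<lambda>u. (1 / q powr q) * (t0 + I u) powr q)"
    unfolding tau_fun_def I_def by auto
  then have "(tau_fun t0 q lam has_real_derivative
      (1 / q powr q) * (q * (t0 + I t) powr (q - 1) * lam t powr (1/q))) (at t within {t0..b})"
    using Ipos t0 q
    by (auto intro!: derivative_eq_intros dI)
  moreover have "(tau_fun t0 q lam has_real_derivative d) (at t within {t0..b})"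
    using D by (rule DERIV_subset) auto
  ultimately have v1: "(tau_fun t0 q lam has_vector_derivative
      (1 / q powr q) * (q * (t0 + I t) powr (q - 1) * lam t powr (1/q))) (at t within cbox t0 b)"
     and v2: "(tau_fun t0 q lam has_vector_derivative d) (at t within cbox t0 b)"
    by (simp_all add: has_real_derivative_iff_has_vector_derivative)
  have ab: "t0 < b" using b_def t by simp
  have "d = (1 / q powr q) * (q * (t0 + I t) powr (q - 1) * lam t powr (1/q))"
    by (rule vector_derivative_unique_within_closed_interval[OF ab _ v2 v1]) (use tI in simp)
  then show ?thesis unfolding I_def .
qed

lemma final_alg:
  fixes K g m T t0 x mu :: real
  assumes K: "K > 0" and g: "g > 0" and m: "m > 0" and T: "T > t0"
    and mu: "mu = (2*K/(T-t0)) powr (1/m)" and x: "x > 0"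
    and le: "(T-t0)/2 \<le> mu * (x powr g / g)"
  shows "x \<ge> (g/2 * (2*K) powr (-1/m)) powr (1/g) * (T-t0) powr ((1+1/m)/g)"
proof -
  have mupos: "mu > 0" using mu K T by simp
  have inv: "1/mu = (T-t0) powr (1/m) * (2*K) powr (-1/m)"
  proof -
    have "1/mu = (T-t0) powr (1/m) / (2*K) powr (1/m)"
      using mu K T by (simp add: powr_divide)
    also have "\<dots> = (T-t0) powr (1/m) * (2*K) powr (-1/m)"
      by (simp add: powr_minus_divide divide_inverse powr_minus)
    finally show ?thesis .
  qed
  have "x powr g \<ge> g * (T-t0) / (2*mu)"
    using le mupos g by (simp add: field_simps)
  also have "g * (T-t0) / (2*mu) = (g/2 * (2*K) powr (-1/m)) * (T-t0) powr (1+1/m)"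
  proof -
    have "g * (T-t0) / (2*mu) = g/2 * (T-t0) * (1/mu)" by simp
    also have "\<dots> = g/2 * (2*K) powr (-1/m) * ((T-t0) powr 1 * (T-t0) powr (1/m))"
      using inv T by simp
    also have "\<dots> = (g/2 * (2*K) powr (-1/m)) * (T-t0) powr (1+1/m)"
      by (simp add: powr_add)
    finally show ?thesis .
  qed
  finally have h: "(g/2 * (2*K) powr (-1/m)) * (T-t0) powr (1+1/m) \<le> x powr g" .
  have "((g/2 * (2*K) powr (-1/m)) * (T-t0) powr (1+1/m)) powr (1/g) \<le> (x powr g) powr (1/g)"
    using h g K T by (intro powr_mono2) auto
  also have "(x powr g) powr (1/g) = x" using g x by (simp add: powr_powr)
  also have "((g/2 * (2*K) powr (-1/m)) * (T-t0) powr (1+1/m)) powr (1/g)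
      = (g/2 * (2*K) powr (-1/m)) powr (1/g) * (T-t0) powr ((1+1/m)/g)"
  proof -
    define c where "c = g/2 * (2*K) powr (-1/m)"
    have c: "c \<ge> 0" unfolding c_def using g by simp
    have "(c * (T-t0) powr (1+1/m)) powr (1/g) = c powr (1/g) * ((T-t0) powr (1+1/m)) powr (1/g)"
      by (rule powr_mult)
    also have "((T-t0) powr (1+1/m)) powr (1/g) = (T-t0) powr ((1+1/m)/g)"
      by (simp add: powr_powr)
    finally show ?thesis unfolding c_def .
  qed
  finally show ?thesis by simp
qed

theorem mainTheorem4:
  fixes f :: "'a::{real_inner,complete_space} \<Rightarrow> real"
    and gradf :: "'a \<Rightarrow> 'a"
    and y y' :: "real \<Rightarrow> 'a"
    and lam tau' :: "real \<Rightarrow> real"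
    and t0 q p :: real
  assumes A: "assumption_A f gradf"
    and t0: "t0 > 0" and q: "q > 0" and p: "p > 1"
    and y_deriv: "\<forall>t\<ge>t0. (y has_vector_derivative y' t) (at t within {t0..})"
    and y'_cont: "continuous_on {t0..} y'"
    and lam_cont: "continuous_on {t0..} lam"
    and lam_pos: "\<forall>t\<ge>t0. lam t > 0"
    and tau_deriv: "\<forall>t\<ge>t0. (tau_fun t0 q lam has_real_derivative tau' t) (at t within {t0..})"
    and ode: "\<forall>t\<ge>t0. y' t + tau' t *\<^sub>R gradf (y t) = 0"
    and lam_norm: "\<forall>t\<ge>t0. lam t powr p * norm (y' t) powr (p - 1) = 1"
  shows "\<exists>C1>0. \<forall>t\<ge>t0. tau_fun t0 q lam t \<ge> C1 * (t - t0) powr (1 + q - 1 / p)"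
proof -
  obtain z where z: "\<And>w. f z \<le> f w" using A unfolding assumption_A_def by auto
  have fder: "\<And>x. (f has_derivative (\<lambda>h. gradf x \<bullet> h)) (at x)"
    using A unfolding assumption_A_def by auto
  define tau where "tau = tau_fun t0 q lam"
  define S where "S = (\<lambda>t. t0 + integral {t0..t} (\<lambda>r. lam r powr (1/q)))"
  define g where "g = (\<lambda>t. norm (gradf (y t)))"
  define P where "P = p - 1"
  have P: "P > 0" using p P_def by simp
  have Spos: "\<And>t. t \<ge> t0 \<Longrightarrow> S t > 0"
  proof -
    fix t assume t: "t \<ge> t0"
    have hc: "continuous_on {t0..t} (\<lambda>r. lam r powr (1/q))"
      using lam_pos t by (intro continuous_on_powr continuous_on_subset[OF lam_cont] continuous_on_const) auto
    have "integral {t0..t} (\<lambda>r. lam r powr (1/q)) \<ge> 0"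
      by (intro integral_nonneg integrable_continuous_interval hc) auto
    then show "S t > 0" unfolding S_def using t0 by simp
  qed
  have tau_eq: "\<And>t. tau t = (1 / q powr q) * S t powr q"
    unfolding tau_def tau_fun_def S_def by simp
  have tau'_eq: "\<And>t. t \<ge> t0 \<Longrightarrow> tau' t = (1 / q powr q) * (q * S t powr (q - 1) * lam t powr (1/q))"
    unfolding S_def using tau_deriv_formula[OF t0 q lam_cont lam_pos] tau_deriv by blast
  have taupos: "\<And>t. t \<ge> t0 \<Longrightarrow> tau t > 0"
  proof -
    fix t assume t: "t \<ge> t0" show "tau t > 0" using tau_eq[of t] Spos[OF t] q by simp
  qed
  have tau'pos: "\<And>t. t \<ge> t0 \<Longrightarrow> tau' t > 0"
  proof -
    fix t assume t: "t \<ge> t0" have "lam t > 0" using lam_pos t by simp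
    then show "tau' t > 0" using tau'_eq[OF t] Spos[OF t] q by simp
  qed
  have R1: "\<And>t. t \<ge> t0 \<Longrightarrow> q * ln (tau' t) = (q - 1) * ln (tau t) + ln (lam t)"
  proof -
    fix t assume t: "t \<ge> t0"
    have S: "S t > 0" and l: "lam t > 0" using Spos[OF t] lam_pos t by auto
    have a: "ln (tau' t) = - q * ln q + ln q + (q - 1) * ln (S t) + (1/q) * ln (lam t)"
      unfolding tau'_eq[OF t] using S l q by (simp add: ln_mult ln_powr ln_div)
    have b: "ln (tau t) = - q * ln q + q * ln (S t)"
      unfolding tau_eq using S l q by (simp add: ln_mult ln_powr ln_div)
    show "q * ln (tau' t) = (q - 1) * ln (tau t) + ln (lam t)"
      unfolding a b using q by (simp add: algebra_simps)
  qed
  have normy': "\<And>t. t \<ge> t0 \<Longrightarrow> norm (y' t) = tau' t * g t"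
  proof -
    fix t assume t: "t \<ge> t0"
    have "y' t = - (tau' t *\<^sub>R gradf (y t))" using ode t by (simp add: eq_neg_iff_add_eq_0)
    then show "norm (y' t) = tau' t * g t" using tau'pos[OF t] unfolding g_def by simp
  qed
  have gpos: "\<And>t. t \<ge> t0 \<Longrightarrow> g t > 0"
  proof (rule ccontr)
    fix t assume t: "t \<ge> t0" and "\<not> g t > 0"
    then have "g t = 0" unfolding g_def by simp
    then have "norm (y' t) = 0" using normy'[OF t] by simp
    then show False using lam_norm[rule_format, OF t] by simp
  qed
  have R2: "\<And>t. t \<ge> t0 \<Longrightarrow> P * ln (g t) = - p * ln (lam t) - P * ln (tau' t)"
  proof -
    fix t assume t: "t \<ge> t0"
    have l: "lam t > 0" and a: "tau' t > 0" and b: "g t > 0" using lam_pos t tau'pos gpos by auto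
    have "ln (lam t powr p * (tau' t * g t) powr P) = 0"
      using lam_norm[rule_format, OF t] normy'[OF t] unfolding P_def by simp
    then have "p * ln (lam t) + P * (ln (tau' t) + ln (g t)) = 0"
      using l a b by (simp add: ln_mult ln_powr)
    then show "P * ln (g t) = - p * ln (lam t) - P * ln (tau' t)" by (simp add: algebra_simps)
  qed
  define E where "E = (\<lambda>t. tau t * (f (y t) - f z) + (1/2) * ((y t - z) \<bullet> (y t - z)))"
  define E' where "E' = (\<lambda>t. tau' t * (f (y t) - f z) + tau t * (gradf (y t) \<bullet> y' t) + (y t - z) \<bullet> y' t)"
  have Ederiv: "\<And>t. t \<ge> t0 \<Longrightarrow> (E has_real_derivative E' t) (at t within {t0..})"
  proof -
    fix t assume t: "t \<ge> t0"
    have yd: "(y has_derivative (\<lambda>h. h *\<^sub>R y' t)) (at t within {t0..})"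
      using y_deriv t by (simp add: has_vector_derivative_def)
    have "((\<lambda>s. f (y s)) has_derivative (\<lambda>h. gradf (y t) \<bullet> (h *\<^sub>R y' t))) (at t within {t0..})"
      by (rule has_derivative_compose[OF yd fder])
    moreover have "(\<lambda>h. gradf (y t) \<bullet> (h *\<^sub>R y' t)) = (*) (gradf (y t) \<bullet> y' t)"
      by (auto simp: fun_eq_iff)
    ultimately have fyd: "((\<lambda>s. f (y s)) has_real_derivative gradf (y t) \<bullet> y' t) (at t within {t0..})"
      unfolding has_field_derivative_def by (rule has_derivative_eq_rhs)
    have "((\<lambda>s. (y s - z) \<bullet> (y s - z)) has_derivative
        (\<lambda>h. (y t - z) \<bullet> (h *\<^sub>R y' t) + (h *\<^sub>R y' t) \<bullet> (y t - z))) (at t within {t0..})"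
      by (auto intro!: derivative_eq_intros yd)
    moreover have "(\<lambda>h. (y t - z) \<bullet> (h *\<^sub>R y' t) + (h *\<^sub>R y' t) \<bullet> (y t - z)) = (*) (2 * ((y t - z) \<bullet> y' t))"
      by (auto simp: fun_eq_iff inner_commute algebra_simps)
    ultimately have nd: "((\<lambda>s. (y s - z) \<bullet> (y s - z)) has_real_derivative 2 * ((y t - z) \<bullet> y' t)) (at t within {t0..})"
      unfolding has_field_derivative_def by (rule has_derivative_eq_rhs)
    have td: "(tau has_real_derivative tau' t) (at t within {t0..})"
      using tau_deriv t unfolding tau_def by auto
    have "(E has_real_derivative (tau' t * (f (y t) - f z) + tau t * (gradf (y t) \<bullet> y' t) + (1/2) * (2 * ((y t - z) \<bullet> y' t)))) (at t within {t0..})"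
      unfolding E_def
    proof (rule DERIV_add)
      show "((\<lambda>s. tau s * (f (y s) - f z)) has_real_derivative tau' t * (f (y t) - f z) + tau t * (gradf (y t) \<bullet> y' t)) (at t within {t0..})"
        by (rule DERIV_cong[OF DERIV_mult'[OF td DERIV_diff[OF fyd DERIV_const]]]) (simp add: algebra_simps)
      show "((\<lambda>s. 1/2 * ((y s - z) \<bullet> (y s - z))) has_real_derivative (1/2) * (2 * ((y t - z) \<bullet> y' t))) (at t within {t0..})"
        by (rule DERIV_cmult[OF nd])
    qed
    then show "(E has_real_derivative E' t) (at t within {t0..})" unfolding E'_def by simp
  qed
  have E'le: "\<And>t. t \<ge> t0 \<Longrightarrow> E' t \<le> - (tau t * tau' t * (g t)^2)"
  proof -
    fix t assume t: "t \<ge> t0"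
    have yy: "y' t = - (tau' t *\<^sub>R gradf (y t))" using ode t by (simp add: eq_neg_iff_add_eq_0)
    have gi: "f z \<ge> f (y t) + gradf (y t) \<bullet> (z - y t)" by (rule grad_ineq[OF A])
    have g2: "(g t)^2 = gradf (y t) \<bullet> gradf (y t)" unfolding g_def by (simp add: power2_norm_eq_inner)
    have "E' t = tau' t * (f (y t) - f z) - tau t * tau' t * (g t)^2 + tau' t * (gradf (y t) \<bullet> (z - y t))"
      unfolding E'_def yy g2 by (simp add: algebra_simps inner_commute)
    also have "\<dots> \<le> - (tau t * tau' t * (g t)^2)"
    proof -
      have "tau' t * (gradf (y t) \<bullet> (z - y t)) \<le> tau' t * (f z - f (y t))"
        using gi tau'pos[OF t] by (intro mult_left_mono) auto
      then show ?thesis by (simp add: algebra_simps)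
    qed
    finally show "E' t \<le> - (tau t * tau' t * (g t)^2)" .
  qed
  have Enn: "\<And>t. t \<ge> t0 \<Longrightarrow> E t \<ge> 0"
  proof -
    fix t assume t: "t \<ge> t0"
    have "tau t * (f (y t) - f z) \<ge> 0" using taupos[OF t] z[of "y t"] by simp
    moreover have "(y t - z) \<bullet> (y t - z) \<ge> 0" by simp
    ultimately show "E t \<ge> 0" unfolding E_def by simp
  qed
  define m where "m = 1 + 2*p*q/P"
  define \<alpha> where "\<alpha> = 1 + 2*p*(q-1)/P"
  define \<beta> where "\<beta> = - \<alpha> / m"
  define \<gamma> where "\<gamma> = 1 + \<beta>"
  define \<theta> where "\<theta> = m / (m + 1)"
  define K where "K = E t0 + 1"
  have m: "m > 0"
  proof -
    have "2*p*q/P > 0" using P p q by (intro divide_pos_pos mult_pos_pos) auto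
    then show ?thesis unfolding m_def by simp
  qed
  have m\<alpha>: "m - \<alpha> = 2*p/P" unfolding m_def \<alpha>_def using P by (simp add: field_simps)
  have \<gamma>eq: "\<gamma> = (m - \<alpha>)/m" unfolding \<gamma>_def \<beta>_def using m by (simp add: field_simps)
  have \<gamma>: "\<gamma> > 0" unfolding \<gamma>eq m\<alpha> using m P p by simp
  have \<theta>: "0 < \<theta>" "\<theta> < 1" unfolding \<theta>_def using m by auto
  have K: "K > 0" unfolding K_def using Enn[of t0] by simp
  have expo: "(1 + 1/m) / \<gamma> = 1 + q - 1/p"
  proof -
    have ma: "m - \<alpha> > 0" unfolding m\<alpha> using P p by simp
    have "(1 + 1/m) / \<gamma> = (m + 1) / (m - \<alpha>)" unfolding \<gamma>eq using m ma by (simp add: field_simps)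
    also have "\<dots> = (2 + 2*p*q/P) / (2*p/P)" unfolding m\<alpha> unfolding m_def by simp
    also have "\<dots> = 1 + q - 1/p" using P p unfolding P_def by (simp add: field_simps)
    finally show ?thesis .
  qed
  define C1 where "C1 = (\<gamma>/2 * (2*K) powr (-1/m)) powr (1/\<gamma>)"
  have C1: "C1 > 0" unfolding C1_def using \<gamma> K by simp
  have main: "tau T \<ge> C1 * (T - t0) powr (1 + q - 1/p)" if T: "T > t0" for T
  proof -
    define mu where "mu = (2*K/(T-t0)) powr (1/m)"
    have mu: "mu > 0" unfolding mu_def using K T by simp
    define M where "M = mu powr (-m)"
    have M: "M > 0" unfolding M_def using mu by simp
    have MK: "M * K = (T-t0)/2"
    proof -
      have "M = (2*K/(T-t0)) powr (-1)" unfolding M_def mu_def using m K T by (simp add: powr_powr)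
      then show ?thesis using K T by (simp add: powr_minus_divide)
    qed
    define \<phi> where "\<phi> = (\<lambda>t. \<theta>*mu*(tau t powr \<gamma> / \<gamma>) - (1-\<theta>)*M*E t - t)"
    define \<phi>' where "\<phi>' = (\<lambda>t. \<theta>*mu*(tau t powr \<beta> * tau' t) - (1-\<theta>)*M*E' t - 1)"
    have \<phi>d: "\<forall>t\<ge>t0. (\<phi> has_real_derivative \<phi>' t) (at t within {t0..})"
    proof (intro allI impI)
      fix t assume t: "t \<ge> t0"
      have td: "(tau has_real_derivative tau' t) (at t within {t0..})"
        using tau_deriv t unfolding tau_def by auto
      have "(\<phi> has_real_derivative (\<theta>*mu*((\<gamma> * tau t powr (\<gamma> - 1) * tau' t) / \<gamma>) - (1-\<theta>)*M*E' t - 1)) (at t within {t0..})"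
      proof -
        have h1: "((\<lambda>s. tau s powr \<gamma> / \<gamma>) has_real_derivative (\<gamma> * tau t powr (\<gamma> - 1) * tau' t) / \<gamma>) (at t within {t0..})"
          by (rule DERIV_cdivide[OF DERIV_chain2[OF has_real_derivative_powr[OF taupos[OF t]] td]])
        note h2 = DERIV_cmult[OF h1, of "\<theta>*mu"]
        note h3 = DERIV_cmult[OF Ederiv[OF t], of "(1-\<theta>)*M"]
        note h4 = DERIV_diff[OF DERIV_diff[OF h2 h3] DERIV_ident]
        then show ?thesis unfolding \<phi>_def by (simp add: mult.assoc)
      qed
      moreover have "\<gamma> - 1 = \<beta>" unfolding \<gamma>_def by simp
      ultimately show "(\<phi> has_real_derivative \<phi>' t) (at t within {t0..})"
        unfolding \<phi>'_def using \<gamma> by simp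
    qed
    have \<phi>nn: "\<forall>t\<ge>t0. \<phi>' t \<ge> 0"
    proof (intro allI impI)
      fix t assume t: "t \<ge> t0"
      define lt where "lt = ln (tau t)"
      define lt' where "lt' = ln (tau' t)"
      define lg where "lg = ln (g t)"
      define ll where "ll = ln (lam t)"
      define a where "a = ln mu + \<beta> * lt + lt'"
      define b where "b = - m * ln mu + lt + lt' + 2 * lg"
      have r1: "q * lt' = (q - 1) * lt + ll" using R1[OF t] unfolding lt_def lt'_def ll_def .
      have r2: "P * lg = - p * ll - P * lt'" using R2[OF t] unfolding lg_def lt'_def ll_def .
      have mb: "m * \<beta> = - \<alpha>" unfolding \<beta>_def using m by simp
      have e1: "P * \<alpha> = P + 2*p*(q-1)" unfolding \<alpha>_def using P by (simp add: field_simps)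
      have e2: "P * m = P + 2*p*q" unfolding m_def using P by (simp add: field_simps)
      have ad: "a = ln mu + \<beta> * lt + lt'" and bd: "b = - m * ln mu + lt + lt' + 2 * lg"
        using a_def b_def by auto
      have "P * (m * a + b) = 0"
        using e1 e2 mb r1 r2 ad bd by algebra
      then have mab: "m * a + b = 0" using P by simp
      have comb: "\<theta> * a + (1 - \<theta>) * b = 0"
      proof -
        have t1: "\<theta>*(m+1) = m" and t2: "(1-\<theta>)*(m+1) = 1" using m by (simp_all add: \<theta>_def field_simps)
        have "(\<theta> * a + (1 - \<theta>) * b)*(m+1) = (\<theta>*(m+1))*a + ((1-\<theta>)*(m+1))*b" by (simp add: algebra_simps)
        also have "\<dots> = m * a + b" using t1 t2 by simp
        finally have "(\<theta> * a + (1 - \<theta>) * b)*(m+1) = 0" using mab by simp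
        then show ?thesis using m by simp
      qed
      have "exp ((1 - (1 - \<theta>)) *\<^sub>R a + (1 - \<theta>) *\<^sub>R b) \<le> (1 - (1 - \<theta>)) * exp a + (1 - \<theta>) * exp b"
        using convex_onD[OF exp_convex, of "1 - \<theta>" a b] \<theta> by simp
      then have young: "1 \<le> \<theta> * exp a + (1 - \<theta>) * exp b" using comb by simp
      have tp: "tau t > 0" "tau' t > 0" "g t > 0" using taupos tau'pos gpos t by auto
      have p1: "tau t powr \<beta> = exp (\<beta> * lt)" unfolding lt_def using tp by (simp add: powr_def)
      have ea: "exp a = mu * tau t powr \<beta> * tau' t"
        unfolding a_def exp_add p1 using tp mu by (simp add: lt'_def)
      have p2: "M = exp (- m * ln mu)" unfolding M_def using mu by (simp add: powr_def)
      have p3: "exp (2 * lg) = (g t)^2"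
        unfolding lg_def mult_2 exp_add using tp by (simp add: power2_eq_square)
      have eb: "exp b = M * (tau t * tau' t * (g t)^2)"
        unfolding b_def exp_add p2 p3 using tp by (simp add: lt_def lt'_def)
      have "(1 - \<theta>) * M * (tau t * tau' t * (g t)^2) \<le> (1 - \<theta>) * M * (- E' t)"
        using E'le[OF t] \<theta> M by (intro mult_left_mono) auto
      then show "\<phi>' t \<ge> 0" unfolding \<phi>'_def using young ea eb by (simp add: algebra_simps)
    qed
    have "\<phi> t0 \<le> \<phi> T" using mono_within[OF \<phi>d \<phi>nn] T by simp
    then have "T - t0 \<le> \<theta>*mu*(tau T powr \<gamma> / \<gamma>) - \<theta>*mu*(tau t0 powr \<gamma> / \<gamma>) + (1-\<theta>)*M*E t0 - (1-\<theta>)*M*E T"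
      unfolding \<phi>_def by (simp add: algebra_simps)
    also have "\<dots> \<le> mu*(tau T powr \<gamma> / \<gamma>) + M*K"
    proof -
      have h1: "\<theta>*mu*(tau T powr \<gamma> / \<gamma>) \<le> mu*(tau T powr \<gamma> / \<gamma>)"
        using \<theta> mu \<gamma> by (intro mult_right_mono) auto
      have h2: "\<theta>*mu*(tau t0 powr \<gamma> / \<gamma>) \<ge> 0" using \<theta> mu \<gamma> by simp
      have h3: "(1-\<theta>)*M*E T \<ge> 0" using \<theta> M Enn[of T] T by simp
      have h4: "(1-\<theta>)*M*E t0 \<le> M*K"
      proof -
        have "(1-\<theta>)*M*E t0 \<le> 1*M*E t0" using \<theta> M Enn[of t0] by (intro mult_right_mono) auto
        also have "\<dots> \<le> M*K" unfolding K_def using M by simp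
        finally show ?thesis .
      qed
      show ?thesis using h1 h2 h3 h4 by linarith
    qed
    finally have "T - t0 \<le> mu*(tau T powr \<gamma> / \<gamma>) + M*K" .
    moreover have aux: "\<And>x y c::real. c \<le> x + y \<Longrightarrow> y = c/2 \<Longrightarrow> c/2 \<le> x" by linarith
    ultimately have "(T-t0)/2 \<le> mu * (tau T powr \<gamma> / \<gamma>)" using MK by blast
    then show ?thesis
      using final_alg[OF K \<gamma> m T mu_def taupos[of T]] T expo unfolding C1_def by simp
  qed
  show ?thesis
  proof (intro exI[of _ C1] conjI allI impI C1)
    fix t assume t: "t \<ge> t0"
    show "tau_fun t0 q lam t \<ge> C1 * (t - t0) powr (1 + q - 1 / p)"
    proof (cases "t = t0")
      case True then show ?thesis using taupos[of t0] unfolding tau_def by simp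
    next
      case False then show ?thesis using main[of t] t unfolding tau_def by simp
    qed
  qed
qed

end
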